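(* Let $G=(V,E)$ be a computation graph with $n=|V|$ vertices, and let $M$ be the fast-memory size. Let $J^*_G$ be the minimum number of non-trivial I/Os over all valid evaluations of $G$, let $\mathcal{O}_G$ be the set of topological evaluation orders of $G$, and for $X\in\mathcal{O}_G$ let $\mathcal{P}_X$ be the set of partitions of $V$ into parts that are each contiguous in the order $X$. Then $$J^*_G \;\geq\; \min_{X \in \mathcal{O}_G}\ \max_{P \in \mathcal{P}_X} \left( \sum_{S \in P}\ \sum_{(u,v) \in \partial S} \frac{1}{d_{out}(u)} \;-\; 2M |P| \right).$$
   Context: A computation graph is a finite directed acyclic graph $G=(V,E)$. Each vertex is an operation producing a single element, and an edge $(u,v)$ means the result of $u$ is an operand of $v$. Sources are the inputs and sinks are the outputs. Execution model: a single processor has a fast memory holding at most $M$ elements and an unbounded slow memory. Every vertex is evaluated exactly once (no recomputation), in an order that is topological with respect to $G$. To evaluate $v$, all parents of $v$ must be in fast memory; a parent not present must be read from slow memory. The eviction policy is unconstrained, but a value that is evicted while still needed by a later vertex must first be written to slow memory. Only non-trivial I/O is counted. Inputs can be placed directly into fast memory at no cost, and outputs are reported immediately at no cost when computed. However, an input that is evicted while still needed must be written to slow memory. Each transfer of one element from fast to slow memory or from slow to fast memory counts as one I/O. $d_{out}(u)$ is the out-degree of $u$ in $G$. For $S\subseteq V$, $\partial S$ is the set of edges $(u,v)\in E$ with exactly one endpoint in $S$. *)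

theory Defs
  imports Complex_Main
begin

definition comp_graph :: "'a set \<Rightarrow> ('a \<times> 'a) set \<Rightarrow> bool" where
  "comp_graph V E \<longleftrightarrow> finite V \<and> E \<subseteq> V \<times> V \<and> acyclic E"

definition d_out :: "('a \<times> 'a) set \<Rightarrow> 'a \<Rightarrow> nat" where
  "d_out E u = card {v. (u, v) \<in> E}"

definition boundary :: "('a \<times> 'a) set \<Rightarrow> 'a set \<Rightarrow> ('a \<times> 'a) set" where
  "boundary E S = {(u, v) \<in> E. (u \<in> S) \<noteq> (v \<in> S)}"

section \<open>Execution model (red-blue pebbling without recomputation)\<close>

datatype 'a io_op = Compute 'a | Read 'a | Write 'a | Evict 'a

text \<open>State: (fast memory, slow memory, set of already evaluated vertices).\<close>
type_synonym 'a mstate = "'a set \<times> 'a set \<times> 'a set"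

fun step :: "'a set \<Rightarrow> ('a \<times> 'a) set \<Rightarrow> nat \<Rightarrow> 'a mstate \<Rightarrow> 'a io_op \<Rightarrow> 'a mstate option" where
  "step V E M (F, Sl, C) (Compute v) =
     (if v \<in> V \<and> v \<notin> C \<and> (\<forall>u. (u, v) \<in> E \<longrightarrow> u \<in> F) \<and> card (insert v F) \<le> M
      then Some (insert v F, Sl, insert v C) else None)"
| "step V E M (F, Sl, C) (Read v) =
     (if v \<in> Sl \<and> card (insert v F) \<le> M then Some (insert v F, Sl, C) else None)"
| "step V E M (F, Sl, C) (Write v) =
     (if v \<in> F then Some (F, insert v Sl, C) else None)"
| "step V E M (F, Sl, C) (Evict v) =
     (if v \<in> F \<and> (v \<in> Sl \<or> (\<forall>w. (v, w) \<in> E \<longrightarrow> w \<in> C))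
      then Some (F - {v}, Sl, C) else None)"

fun run :: "'a set \<Rightarrow> ('a \<times> 'a) set \<Rightarrow> nat \<Rightarrow> 'a mstate \<Rightarrow> 'a io_op list \<Rightarrow> 'a mstate option" where
  "run V E M s [] = Some s"
| "run V E M s (op # ops) =
     (case step V E M s op of None \<Rightarrow> None | Some s' \<Rightarrow> run V E M s' ops)"

text \<open>A valid evaluation: starts with empty memories, every step legal, and at the
  end every vertex has been evaluated (each exactly once, since Compute requires
  the vertex not yet evaluated).\<close>
definition valid_evaluation :: "'a set \<Rightarrow> ('a \<times> 'a) set \<Rightarrow> nat \<Rightarrow> 'a io_op list \<Rightarrow> bool" where
  "valid_evaluation V E M ops \<longleftrightarrow>
     (\<exists>F Sl. run V E M ({}, {}, {}) ops = Some (F, Sl, V))"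

fun is_io :: "'a io_op \<Rightarrow> bool" where
  "is_io (Read _) = True"
| "is_io (Write _) = True"
| "is_io _ = False"

definition io_cost :: "'a io_op list \<Rightarrow> nat" where
  "io_cost ops = length (filter is_io ops)"

definition J_opt :: "'a set \<Rightarrow> ('a \<times> 'a) set \<Rightarrow> nat \<Rightarrow> nat" where
  "J_opt V E M = (LEAST k. \<exists>ops. valid_evaluation V E M ops \<and> io_cost ops = k)"

definition topo_orders :: "'a set \<Rightarrow> ('a \<times> 'a) set \<Rightarrow> 'a list set" where
  "topo_orders V E = {X. distinct X \<and> set X = V \<and>
      (\<forall>i j. i < length X \<and> j < length X \<and> (X ! i, X ! j) \<in> E \<longrightarrow> i < j)}"

definition is_partition :: "'a set \<Rightarrow> 'a set set \<Rightarrow> bool" where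
  "is_partition V P \<longleftrightarrow> \<Union>P = V \<and> {} \<notin> P \<and>
      (\<forall>S\<in>P. \<forall>T\<in>P. S \<noteq> T \<longrightarrow> S \<inter> T = {})"

definition contiguous :: "'a list \<Rightarrow> 'a set \<Rightarrow> bool" where
  "contiguous X S \<longleftrightarrow> (\<exists>a b. a \<le> b \<and> b \<le> length X \<and> S = {X ! i | i. a \<le> i \<and> i < b})"

definition contig_partitions :: "'a set \<Rightarrow> 'a list \<Rightarrow> 'a set set set" where
  "contig_partitions V X = {P. is_partition V P \<and> (\<forall>S\<in>P. contiguous X S)}"

definition cut_value :: "('a \<times> 'a) set \<Rightarrow> nat \<Rightarrow> 'a set set \<Rightarrow> real" where
  "cut_value E M P =
     (\<Sum>S\<in>P. \<Sum>e\<in>boundary E S. 1 / real (d_out E (fst e))) - 2 * real M * real (card P)"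

end

theory Submission
  imports Defs
begin

fun cv :: "'a io_op \<Rightarrow> 'a list" where
  "cv (Compute v) = [v]" | "cv _ = []"

fun opvar :: "'a io_op \<Rightarrow> 'a" where
  "opvar (Compute v) = v" | "opvar (Read v) = v" | "opvar (Write v) = v" | "opvar (Evict v) = v"

definition topo :: "('a \<times> 'a) set \<Rightarrow> 'a list \<Rightarrow> bool" where
  "topo E L \<longleftrightarrow> (\<forall>i j. i < length L \<longrightarrow> j < length L \<longrightarrow> (L!i, L!j) \<in> E \<longrightarrow> i < j)"

definition minv :: "'a set \<Rightarrow> ('a \<times> 'a) set \<Rightarrow> nat \<Rightarrow> 'a mstate \<Rightarrow> 'a list \<Rightarrow> bool" where
  "minv V E M s L \<longleftrightarrow> (case s of (F, Sl, C) \<Rightarrow> F \<subseteq> C \<and> Sl \<subseteq> C \<and> C \<subseteq> V \<and> card F \<le> M \<and>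
     (\<forall>u w. (u, w) \<in> E \<longrightarrow> w \<in> C \<longrightarrow> u \<in> C) \<and> C = set L \<and> distinct L \<and> topo E L)"

lemma topo_snoc:
  assumes "topo E L" "v \<notin> set L" "\<forall>u. (u, v) \<in> E \<longrightarrow> u \<in> set L"
    "\<forall>u w. (u, w) \<in> E \<longrightarrow> w \<in> set L \<longrightarrow> u \<in> set L"
  shows "topo E (L @ [v])"
  unfolding topo_def
proof (intro allI impI)
  fix i j assume i: "i < length (L @ [v])" and j: "j < length (L @ [v])"
    and e: "((L @ [v]) ! i, (L @ [v]) ! j) \<in> E"
  show "i < j"
  proof (cases "i < length L")
    case True
    show ?thesis
    proof (cases "j < length L")
      case True
      with \<open>i < length L\<close> e assms(1) show ?thesis by (auto simp: topo_def nth_append)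
    next
      case False
      with j True show ?thesis by simp
    qed
  next
    case False
    then have iv: "i = length L" using i by simp
    show ?thesis
    proof (cases "j < length L")
      case True
      with e iv have "(v, L ! j) \<in> E" by (simp add: nth_append)
      with assms(2,4) True show ?thesis by auto
    next
      case False
      then have "j = length L" using j by simp
      with e iv have "(v, v) \<in> E" by simp
      with assms(2,3) show ?thesis by auto
    qed
  qed
qed

lemma step_inv:
  assumes "minv V E M s L" "step V E M s op = Some s'"
  shows "minv V E M s' (L @ cv op)"
proof -
  obtain F Sl C where s: "s = (F, Sl, C)" by (cases s) auto
  show ?thesis
  proof (cases op)
    case (Compute v)
    with assms s have h: "v \<in> V" "v \<notin> C" "\<forall>u. (u, v) \<in> E \<longrightarrow> u \<in> F" "card (insert v F) \<le> M"
      and s': "s' = (insert v F, Sl, insert v C)" by (auto split: if_splits)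
    from assms(1) s have i: "F \<subseteq> C" "Sl \<subseteq> C" "C \<subseteq> V" "card F \<le> M"
      "\<forall>u w. (u, w) \<in> E \<longrightarrow> w \<in> C \<longrightarrow> u \<in> C" "C = set L" "distinct L" "topo E L"
      by (auto simp: minv_def)
    have "topo E (L @ [v])" using topo_snoc[of E L v] i h by blast
    then show ?thesis using i h s' Compute by (auto simp: minv_def)
  next
    case (Read v)
    with assms s show ?thesis by (auto simp: minv_def split: if_splits)
  next
    case (Write v)
    with assms s show ?thesis by (auto simp: minv_def split: if_splits)
  next
    case (Evict v)
    with assms s show ?thesis
      by (auto simp: minv_def split: if_splits intro: le_trans[OF card_Diff1_le])
  qed
qed

lemma step_facts:
  assumes "step V E M (F, Sl, C) op = Some (F', Sl', C')"
  shows "C \<subseteq> C'"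
    and "x \<notin> C \<Longrightarrow> x \<in> C' \<Longrightarrow> op = Compute x \<and> (\<forall>u. (u, x) \<in> E \<longrightarrow> u \<in> F) \<and> x \<in> F'"
    and "x \<notin> F \<Longrightarrow> x \<in> F' \<Longrightarrow> (op = Compute x \<and> x \<notin> C \<and> x \<in> C') \<or> op = Read x"
    and "x \<in> F \<Longrightarrow> x \<notin> F' \<Longrightarrow> x \<in> Sl \<or> (\<forall>w. (x, w) \<in> E \<longrightarrow> w \<in> C)"
    and "x \<notin> Sl \<Longrightarrow> x \<in> Sl' \<Longrightarrow> op = Write x"
  using assms by (cases op; auto split: if_splits)+

lemma run_prefix:
  "run V E M s ops = Some r \<Longrightarrow> t < length ops \<Longrightarrow>
   \<exists>s1 s2. run V E M s (take t ops) = Some s1 \<and> step V E M s1 (ops ! t) = Some s2 \<and>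
     run V E M s (take (Suc t) ops) = Some s2"
proof (induction ops arbitrary: s t)
  case Nil
  then show ?case by simp
next
  case (Cons a ops)
  then obtain s' where s': "step V E M s a = Some s'" "run V E M s' ops = Some r"
    by (auto split: option.splits)
  show ?case
  proof (cases t)
    case 0
    with s' show ?thesis by (cases s') auto
  next
    case (Suc t')
    with Cons.prems have "t' < length ops" by simp
    from Cons.IH[OF s'(2) this] s' Suc show ?thesis by simp
  qed
qed

lemma crossing:
  "\<not> P a \<Longrightarrow> P b \<Longrightarrow> a \<le> b \<Longrightarrow> \<exists>t. a \<le> t \<and> t < b \<and> \<not> P t \<and> P (Suc t)"
proof (induction b)
  case 0
  then show ?case by simp
next
  case (Suc b)
  show ?case
  proof (cases "P b")
    case True
    then have "a \<le> b" using Suc.prems by (metis le_Suc_eq)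
    with Suc.IH Suc.prems True show ?thesis by (metis less_SucI)
  next
    case False
    then show ?thesis using Suc.prems by (metis le_Suc_eq lessI)
  qed
qed

lemma sum_bound:
  assumes "finite E" "D \<subseteq> E" "fst ` D \<subseteq> U" "finite U"
  shows "(\<Sum>e\<in>D. 1 / real (d_out E (fst e))) \<le> real (card U)"
proof -
  have fD: "finite D" using assms(1,2) finite_subset by blast
  have "(\<Sum>e\<in>D. 1 / real (d_out E (fst e))) =
      (\<Sum>u\<in>U. \<Sum>e\<in>{e\<in>D. fst e = u}. 1 / real (d_out E (fst e)))"
    by (rule sum.group[OF fD assms(4) assms(3), symmetric])
  also have "\<dots> \<le> (\<Sum>u\<in>U. 1)"
  proof (rule sum_mono)
    fix u assume "u \<in> U"
    have "(\<Sum>e\<in>{e\<in>D. fst e = u}. 1 / real (d_out E (fst e))) =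
        (\<Sum>e\<in>{e\<in>D. fst e = u}. 1 / real (d_out E u))"
      by (rule sum.cong) auto
    also have "\<dots> = real (card {e\<in>D. fst e = u}) / real (d_out E u)" by simp
    finally have eq: "(\<Sum>e\<in>{e\<in>D. fst e = u}. 1 / real (d_out E (fst e))) =
        real (card {e\<in>D. fst e = u}) / real (d_out E u)" .
    have sub: "{e\<in>D. fst e = u} \<subseteq> Pair u ` {v. (u, v) \<in> E}" using assms(2) by force
    have fin: "finite {v. (u, v) \<in> E}"
      using finite_subset[of "{v. (u, v) \<in> E}" "snd ` E"] assms(1) by force
    have "card {e\<in>D. fst e = u} \<le> card (Pair u ` {v. (u, v) \<in> E})"
      by (rule card_mono[OF finite_imageI[OF fin] sub])
    also have "\<dots> \<le> d_out E u" unfolding d_out_def by (rule card_image_le[OF fin])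
    finally have c: "card {e\<in>D. fst e = u} \<le> d_out E u" .
    show "(\<Sum>e\<in>{e\<in>D. fst e = u}. 1 / real (d_out E (fst e))) \<le> 1"
    proof (cases "d_out E u = 0")
      case True
      then show ?thesis using eq by simp
    next
      case False
      then show ?thesis using eq c by (simp add: divide_le_eq_1)
    qed
  qed
  also have "\<dots> = real (card U)" by simp
  finally show ?thesis .
qed


locale evl =
  fixes V :: "'a set" and E :: "('a \<times> 'a) set" and M :: nat and ops :: "'a io_op list"
    and Ff Sf :: "'a set"
  assumes finV: "finite V" and EV: "E \<subseteq> V \<times> V"
    and runok: "run V E M ({}, {}, {}) ops = Some (Ff, Sf, V)"
begin

definition st :: "nat \<Rightarrow> 'a mstate" where
  "st t = the (run V E M ({}, {}, {}) (take t ops))"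
definition Fa where "Fa t = fst (st t)"
definition Sa where "Sa t = fst (snd (st t))"
definition Ca where "Ca t = snd (snd (st t))"
definition pre where "pre t = concat (map cv (take t ops))"
definition X where "X = concat (map cv ops)"

lemma st_step: "t < length ops \<Longrightarrow> step V E M (st t) (ops ! t) = Some (st (Suc t))"
  using run_prefix[OF runok] by (force simp: st_def)

lemma st_0: "st 0 = ({}, {}, {})" by (simp add: st_def)
lemma st_N: "st (length ops) = (Ff, Sf, V)" by (simp add: st_def runok)

lemma st_eq: "st t = (Fa t, Sa t, Ca t)" by (simp add: Fa_def Sa_def Ca_def)

lemma step_t: "t < length ops \<Longrightarrow>
   step V E M (Fa t, Sa t, Ca t) (ops ! t) = Some (Fa (Suc t), Sa (Suc t), Ca (Suc t))"
  using st_step by (simp add: st_eq[symmetric])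

lemma pre_Suc: "t < length ops \<Longrightarrow> pre (Suc t) = pre t @ cv (ops ! t)"
  by (simp add: pre_def take_Suc_conv_app_nth)

lemma inv_all: "t \<le> length ops \<Longrightarrow> minv V E M (st t) (pre t)"
proof (induction t)
  case 0
  then show ?case by (simp add: st_0 pre_def minv_def topo_def)
next
  case (Suc t)
  then show ?case using step_inv[OF _ st_step] pre_Suc by simp
qed

lemma invs:
  assumes "t \<le> length ops"
  shows "Fa t \<subseteq> Ca t" "Sa t \<subseteq> Ca t" "Ca t \<subseteq> V" "card (Fa t) \<le> M"
    "\<And>u w. (u, w) \<in> E \<Longrightarrow> w \<in> Ca t \<Longrightarrow> u \<in> Ca t" "Ca t = set (pre t)"
    "distinct (pre t)" "topo E (pre t)"
  using inv_all[OF assms] by (auto simp: minv_def st_eq)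

lemma Ca_mono: assumes "t1 \<le> t2" "t2 \<le> length ops" shows "Ca t1 \<subseteq> Ca t2"
proof
  fix x assume x: "x \<in> Ca t1"
  show "x \<in> Ca t2"
  proof (rule ccontr)
    assume "x \<notin> Ca t2"
    then obtain t where "t1 \<le> t" "t < t2" "x \<in> Ca t" "x \<notin> Ca (Suc t)"
      using crossing[of "\<lambda>t. x \<notin> Ca t" t1 t2] x assms by auto
    then show False using step_facts(1)[OF step_t[of t]] assms by auto
  qed
qed

lemma finE: "finite E"
  using finite_subset[OF EV] finV by blast

lemma seg:
  assumes lh: "lo \<le> hi" "hi \<le> length ops"
  shows "(\<Sum>e\<in>boundary E (Ca hi - Ca lo). 1 / real (d_out E (fst e)))
     \<le> 2 * real M + real (card {t. lo \<le> t \<and> t < hi \<and> is_io (ops ! t)})"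
proof -
  define S where "S = Ca hi - Ca lo"
  define A where "A = {u. u \<notin> S \<and> (\<exists>v\<in>S. (u, v) \<in> E)}"
  define B where "B = {u\<in>S. \<exists>w. w \<notin> S \<and> (u, w) \<in> E}"
  define R where "R = {t. lo \<le> t \<and> t < hi \<and> (\<exists>u. ops ! t = Read u)}"
  define W where "W = {t. lo \<le> t \<and> t < hi \<and> (\<exists>u. ops ! t = Write u)}"
  define IO where "IO = {t. lo \<le> t \<and> t < hi \<and> is_io (ops ! t)}"
  have enterC: "\<exists>t. lo \<le> t \<and> t < hi \<and> x \<notin> Ca t \<and> x \<in> Ca (Suc t)" if "x \<in> S" for x
    using crossing[of "\<lambda>t. x \<in> Ca t" lo hi] that lh by (auto simp: S_def)
  have A_sub: "A \<subseteq> Fa lo \<union> (\<lambda>t. opvar (ops ! t)) ` R"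
  proof
    fix u assume "u \<in> A"
    then obtain v where uv: "u \<notin> S" "v \<in> S" "(u, v) \<in> E" by (auto simp: A_def)
    obtain tv where tv: "lo \<le> tv" "tv < hi" "v \<notin> Ca tv" "v \<in> Ca (Suc tv)"
      using enterC[OF uv(2)] by blast
    have "u \<in> Fa tv" using step_facts(2)[OF step_t[of tv]] tv uv lh by auto
    show "u \<in> Fa lo \<union> (\<lambda>t. opvar (ops ! t)) ` R"
    proof (cases "u \<in> Fa lo")
      case False
      then obtain t where t: "lo \<le> t" "t < tv" "u \<notin> Fa t" "u \<in> Fa (Suc t)"
        using crossing[of "\<lambda>t. u \<in> Fa t" lo tv] \<open>u \<in> Fa tv\<close> tv by auto
      have "ops ! t = Compute u \<and> u \<notin> Ca t \<and> u \<in> Ca (Suc t) \<or> ops ! t = Read u"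
        using step_facts(3)[OF step_t[of t]] t tv lh by auto
      moreover have "\<not> (u \<notin> Ca t \<and> u \<in> Ca (Suc t))"
      proof
        assume a: "u \<notin> Ca t \<and> u \<in> Ca (Suc t)"
        have "Ca lo \<subseteq> Ca t" using Ca_mono t tv lh by auto
        moreover have "Ca (Suc t) \<subseteq> Ca hi" using Ca_mono t tv lh by auto
        ultimately have "u \<in> S" using a by (auto simp: S_def)
        with uv show False by simp
      qed
      ultimately have "ops ! t = Read u" by blast
      then have "t \<in> R" "u = opvar (ops ! t)" using t tv by (auto simp: R_def)
      then show ?thesis by blast
    qed simp
  qed
  have B_sub: "B \<subseteq> Fa hi \<union> (\<lambda>t. opvar (ops ! t)) ` W"
  proof
    fix u assume "u \<in> B"
    then obtain w where uw: "u \<in> S" "w \<notin> S" "(u, w) \<in> E" by (auto simp: B_def)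
    obtain tu where tu: "lo \<le> tu" "tu < hi" "u \<notin> Ca tu" "u \<in> Ca (Suc tu)"
      using enterC[OF uw(1)] by blast
    have uF: "u \<in> Fa (Suc tu)" using step_facts(2)[OF step_t[of tu]] tu lh by auto
    show "u \<in> Fa hi \<union> (\<lambda>t. opvar (ops ! t)) ` W"
    proof (cases "u \<in> Fa hi")
      case False
      then obtain t' where t': "Suc tu \<le> t'" "t' < hi" "u \<in> Fa t'" "u \<notin> Fa (Suc t')"
        using crossing[of "\<lambda>t. u \<notin> Fa t" "Suc tu" hi] uF tu by auto
      have "u \<in> Sa t' \<or> (\<forall>w. (u, w) \<in> E \<longrightarrow> w \<in> Ca t')"
        using step_facts(4)[OF step_t[of t']] t' lh by auto
      moreover have "\<not> (\<forall>w. (u, w) \<in> E \<longrightarrow> w \<in> Ca t')"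
      proof
        assume "\<forall>w. (u, w) \<in> E \<longrightarrow> w \<in> Ca t'"
        then have "w \<in> Ca t'" using uw by blast
        then have "w \<in> Ca hi" using Ca_mono[of t' hi] t' lh by auto
        then have "w \<in> Ca lo" using uw by (auto simp: S_def)
        then have "u \<in> Ca lo" using invs(5)[of lo u w] uw lh by auto
        then show False using uw by (auto simp: S_def)
      qed
      ultimately have "u \<in> Sa t'" by blast
      moreover have "u \<notin> Sa tu" using invs(2)[of tu] tu lh by auto
      ultimately obtain t'' where t'': "tu \<le> t''" "t'' < t'" "u \<notin> Sa t''" "u \<in> Sa (Suc t'')"
        using crossing[of "\<lambda>t. u \<in> Sa t" tu t'] t' by auto
      have "ops ! t'' = Write u"
        using step_facts(5)[OF step_t[of t'']] t'' t' lh by auto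
      then have "t'' \<in> W" "u = opvar (ops ! t'')" using t'' t' tu by (auto simp: W_def)
      then show ?thesis by blast
    qed simp
  qed
  have fR: "finite R" unfolding R_def by (rule finite_subset[of _ "{..<hi}"]) auto
  have fW: "finite W" unfolding W_def by (rule finite_subset[of _ "{..<hi}"]) auto
  have "Fa lo \<subseteq> V" using invs(1,3)[of lo] lh by auto
  then have fFlo: "finite (Fa lo)" using finite_subset[OF _ finV] by blast
  have "Fa hi \<subseteq> V" using invs(1,3)[of hi] lh by auto
  then have fFhi: "finite (Fa hi)" using finite_subset[OF _ finV] by blast
  have cA: "card A \<le> M + card R"
  proof -
    have "card A \<le> card (Fa lo \<union> (\<lambda>t. opvar (ops ! t)) ` R)"
      by (rule card_mono[OF _ A_sub]) (use fFlo fR in auto)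
    also have "\<dots> \<le> card (Fa lo) + card ((\<lambda>t. opvar (ops ! t)) ` R)" by (rule card_Un_le)
    also have "\<dots> \<le> M + card R" using invs(4)[of lo] lh card_image_le[OF fR, of "\<lambda>t. opvar (ops ! t)"] by linarith
    finally show ?thesis .
  qed
  have cB: "card B \<le> M + card W"
  proof -
    have "card B \<le> card (Fa hi \<union> (\<lambda>t. opvar (ops ! t)) ` W)"
      by (rule card_mono[OF _ B_sub]) (use fFhi fW in auto)
    also have "\<dots> \<le> card (Fa hi) + card ((\<lambda>t. opvar (ops ! t)) ` W)" by (rule card_Un_le)
    also have "\<dots> \<le> M + card W" using invs(4)[of hi] lh card_image_le[OF fW, of "\<lambda>t. opvar (ops ! t)"] by linarith
    finally show ?thesis .
  qed
  have isio: "is_io op \<longleftrightarrow> (\<exists>u. op = Read u) \<or> (\<exists>u. op = Write u)" for op :: "'a io_op"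
    by (cases op) auto
  have "R \<union> W = IO" unfolding R_def W_def IO_def isio by auto
  moreover have "R \<inter> W = {}" unfolding R_def W_def by auto
  ultimately have cIO: "card IO = card R + card W" using card_Un_disjoint[OF fR fW] by simp
  have fAB: "finite (A \<union> B)"
  proof -
    have "A \<union> B \<subseteq> V" using EV invs(3)[of hi] lh by (auto simp: A_def B_def S_def)
    then show ?thesis using finite_subset[OF _ finV] by blast
  qed
  have "(\<Sum>e\<in>boundary E S. 1 / real (d_out E (fst e))) \<le> real (card (A \<union> B))"
  proof (rule sum_bound[OF finE])
    show "boundary E S \<subseteq> E" by (auto simp: boundary_def)
    show "fst ` boundary E S \<subseteq> A \<union> B" by (force simp: boundary_def A_def B_def)
  qed (rule fAB)
  also have "\<dots> \<le> real (card A + card B)" using card_Un_le[of A B] by linarith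
  also have "\<dots> \<le> 2 * real M + real (card IO)" using cA cB cIO by linarith
  finally show ?thesis by (simp add: S_def IO_def)
qed


definition cnt where "cnt t = length (pre t)"
definition g where "g a = (LEAST t. a \<le> cnt t)"

lemma pre_N: "pre (length ops) = X" by (simp add: pre_def X_def)

lemma take_pre: "t \<le> length ops \<Longrightarrow> take (cnt t) X = pre t"
proof -
  assume "t \<le> length ops"
  have "X = pre t @ concat (map cv (drop t ops))"
    unfolding X_def pre_def by (metis append_take_drop_id concat_append map_append)
  then show ?thesis by (simp add: cnt_def)
qed

lemma cnt_Suc: "t < length ops \<Longrightarrow> cnt (Suc t) \<le> Suc (cnt t)"
proof -
  assume t: "t < length ops"
  have "length (cv (ops ! t)) \<le> 1" by (cases "ops ! t") auto
  then show ?thesis using pre_Suc[OF t] by (simp add: cnt_def)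
qed

lemma cnt_N: "cnt (length ops) = length X" by (simp add: cnt_def pre_N)
lemma cnt_0: "cnt 0 = 0" by (simp add: cnt_def pre_def)

lemma g_props: assumes "a \<le> length X" shows "g a \<le> length ops" "cnt (g a) = a"
proof -
  have ex: "a \<le> cnt (length ops)" using assms cnt_N by simp
  show gN: "g a \<le> length ops" unfolding g_def by (rule Least_le[of "\<lambda>t. a \<le> cnt t", OF ex])
  have ge: "a \<le> cnt (g a)" unfolding g_def by (rule LeastI[of "\<lambda>t. a \<le> cnt t", OF ex])
  show "cnt (g a) = a"
  proof (cases "g a")
    case 0
    then show ?thesis using ge cnt_0 by simp
  next
    case (Suc t)
    then have "\<not> a \<le> cnt t" unfolding g_def by (metis lessI not_less_Least)
    moreover have "cnt (Suc t) \<le> Suc (cnt t)" using cnt_Suc gN Suc by simp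
    ultimately show ?thesis using ge Suc by simp
  qed
qed

lemma g_mono: "a \<le> a' \<Longrightarrow> a' \<le> length X \<Longrightarrow> g a \<le> g a'"
  using g_props[of a'] unfolding g_def by (metis Least_le le_trans)

lemma Ca_g: "a \<le> length X \<Longrightarrow> Ca (g a) = set (take a X)"
  using g_props[of a] take_pre[of "g a"] invs(6)[of "g a"] by simp

lemma Ca_N: "Ca (length ops) = V" by (simp add: Ca_def st_N)

lemma X_props: "distinct X" "set X = V" "topo E X"
  using invs(6,7,8)[of "length ops"] Ca_N pre_N by auto

lemma seg_set: assumes "a \<le> b" "b \<le> length X"
  shows "{X ! i | i. a \<le> i \<and> i < b} = set (take b X) - set (take a X)"
proof
  show "{X ! i | i. a \<le> i \<and> i < b} \<subseteq> set (take b X) - set (take a X)"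
  proof
    fix x assume "x \<in> {X ! i | i. a \<le> i \<and> i < b}"
    then obtain i where i: "a \<le> i" "i < b" "x = X ! i" by blast
    have "x \<in> set (take b X)" using i assms by (auto simp: in_set_conv_nth)
    moreover have "x \<notin> set (take a X)"
    proof
      assume "x \<in> set (take a X)"
      then obtain j where j: "j < a" "X ! j = x" using assms by (auto simp: in_set_conv_nth)
      have "j < length X" "i < length X" using j i assms by auto
      then have "j = i" using nth_eq_iff_index_eq[OF X_props(1), of j i] j i by simp
      then show False using i j by simp
    qed
    ultimately show "x \<in> set (take b X) - set (take a X)" by blast
  qed
next
  show "set (take b X) - set (take a X) \<subseteq> {X ! i | i. a \<le> i \<and> i < b}"
  proof
    fix x assume x: "x \<in> set (take b X) - set (take a X)"
    then obtain i where i: "i < b" "X ! i = x" using assms by (auto simp: in_set_conv_nth)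
    have "\<not> i < a"
    proof
      assume "i < a"
      then have "x \<in> set (take a X)" using i assms by (auto simp: in_set_conv_nth)
      with x show False by blast
    qed
    then show "x \<in> {X ! i | i. a \<le> i \<and> i < b}" using i by auto
  qed
qed

lemma X_topo: "X \<in> topo_orders V E"
  using X_props unfolding topo_orders_def by (simp add: topo_def)

lemma cut_le:
  assumes P: "P \<in> contig_partitions V X"
  shows "cut_value E M P \<le> real (io_cost ops)"
proof -
  have part: "is_partition V P" and con: "\<forall>S\<in>P. contiguous X S"
    using P by (auto simp: contig_partitions_def)
  have "\<forall>S\<in>P. \<exists>ab. fst ab < snd ab \<and> snd ab \<le> length X \<and>
      S = {X ! i | i. fst ab \<le> i \<and> i < snd ab}"
  proof
    fix S assume SP: "S \<in> P"
    then obtain a b where ab: "a \<le> b" "b \<le> length X" "S = {X ! i | i. a \<le> i \<and> i < b}"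
      using con by (auto simp: contiguous_def)
    have "S \<noteq> {}" using SP part by (auto simp: is_partition_def)
    then have "a < b" using ab by (cases "a = b") auto
    then show "\<exists>ab. fst ab < snd ab \<and> snd ab \<le> length X \<and>
      S = {X ! i | i. fst ab \<le> i \<and> i < snd ab}" using ab by (intro exI[of _ "(a, b)"]) auto
  qed
  from bchoice[OF this] obtain h where hh: "\<forall>S\<in>P. fst (h S) < snd (h S) \<and> snd (h S) \<le> length X \<and>
      S = {X ! i | i. fst (h S) \<le> i \<and> i < snd (h S)}" by blast
  have h: "fst (h S) < snd (h S) \<and> snd (h S) \<le> length X \<and>
      S = {X ! i | i. fst (h S) \<le> i \<and> i < snd (h S)}" if "S \<in> P" for S
    using hh that by blast
  define lo where "lo S = g (fst (h S))" for S
  define hi where "hi S = g (snd (h S))" for S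
  define J where "J S = {t. lo S \<le> t \<and> t < hi S \<and> is_io (ops ! t)}" for S
  have lohi: "lo S \<le> hi S" "hi S \<le> length ops" if "S \<in> P" for S
    using h[OF that] g_mono[of "fst (h S)" "snd (h S)"] g_props(1)[of "snd (h S)"]
    unfolding lo_def hi_def by auto
  have Seq: "S = Ca (hi S) - Ca (lo S)" if "S \<in> P" for S
  proof -
    have a: "fst (h S) < snd (h S)" "snd (h S) \<le> length X"
      and b: "S = {X ! i | i. fst (h S) \<le> i \<and> i < snd (h S)}" using h[OF that] by blast+
    have "S = set (take (snd (h S)) X) - set (take (fst (h S)) X)"
      using b seg_set[of "fst (h S)" "snd (h S)"] a by simp
    then show ?thesis using Ca_g[of "fst (h S)"] Ca_g[of "snd (h S)"] a
      unfolding lo_def hi_def by simp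
  qed
  have finP: "finite P"
  proof -
    have "P \<subseteq> Pow V" using part by (auto simp: is_partition_def)
    then show ?thesis using finV by (meson finite_Pow_iff finite_subset)
  qed
  have each: "(\<Sum>e\<in>boundary E S. 1 / real (d_out E (fst e))) \<le> 2 * real M + real (card (J S))"
    if "S \<in> P" for S
    using seg[OF lohi[OF that]] Seq[OF that] unfolding J_def by simp
  have finJ: "finite (J S)" for S
    unfolding J_def by (rule finite_subset[of _ "{..<hi S}"]) auto
  have disj: "J S \<inter> J T = {}" if "S \<in> P" "T \<in> P" "S \<noteq> T" for S T
  proof -
    obtain a b where hS: "h S = (a, b)" by (cases "h S")
    obtain a' b' where hT: "h T = (a', b')" by (cases "h T")
    have ST: "S \<inter> T = {}" using part that by (auto simp: is_partition_def)
    have hs: "a < b" "b \<le> length X" "S = {X ! i | i. a \<le> i \<and> i < b}" using h[OF that(1)] hS by auto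
    have ht: "a' < b'" "b' \<le> length X" "T = {X ! i | i. a' \<le> i \<and> i < b'}" using h[OF that(2)] hT by auto
    have "b \<le> a' \<or> b' \<le> a"
    proof (rule ccontr)
      assume "\<not> (b \<le> a' \<or> b' \<le> a)"
      then have "X ! max a a' \<in> S" "X ! max a a' \<in> T" using hs ht by auto
      with ST show False by blast
    qed
    then show ?thesis
    proof
      assume "b \<le> a'"
      then have "hi S \<le> lo T" using g_mono ht hS hT unfolding lo_def hi_def by auto
      then show ?thesis unfolding J_def by auto
    next
      assume "b' \<le> a"
      then have "hi T \<le> lo S" using g_mono hs hS hT unfolding lo_def hi_def by auto
      then show ?thesis unfolding J_def by auto
    qed
  qed
  have "(\<Sum>S\<in>P. real (card (J S))) = real (\<Sum>S\<in>P. card (J S))" by simp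
  also have "(\<Sum>S\<in>P. card (J S)) = card (\<Union> (J ` P))"
    using card_UN_disjoint[OF finP, of J] finJ disj by (simp add: Ball_def)
  also have "card (\<Union> (J ` P)) \<le> card {i. i < length ops \<and> is_io (ops ! i)}"
  proof (rule card_mono)
    show "finite {i. i < length ops \<and> is_io (ops ! i)}" by simp
    show "\<Union> (J ` P) \<subseteq> {i. i < length ops \<and> is_io (ops ! i)}"
      using lohi unfolding J_def by fastforce
  qed
  also have "\<dots> = io_cost ops" by (simp add: io_cost_def length_filter_conv_card)
  finally have tot: "(\<Sum>S\<in>P. real (card (J S))) \<le> real (io_cost ops)" by simp
  have "(\<Sum>S\<in>P. \<Sum>e\<in>boundary E S. 1 / real (d_out E (fst e)))
      \<le> (\<Sum>S\<in>P. 2 * real M + real (card (J S)))" by (rule sum_mono) (rule each)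
  also have "\<dots> = 2 * real M * real (card P) + (\<Sum>S\<in>P. real (card (J S)))"
    by (simp add: sum.distrib)
  finally show ?thesis using tot unfolding cut_value_def by linarith
qed

end

theorem theorem4p2:
  fixes V :: "'a set" and E :: "('a \<times> 'a) set" and M :: nat
  assumes "comp_graph V E"
    and "\<exists>ops. valid_evaluation V E M ops"
  shows "real (J_opt V E M) \<ge>
    Min ((\<lambda>X. Max (cut_value E M ` contig_partitions V X)) ` topo_orders V E)"
proof -
  have finV: "finite V" and EV: "E \<subseteq> V \<times> V" using assms(1) by (auto simp: comp_graph_def)
  have "\<exists>k. \<exists>ops. valid_evaluation V E M ops \<and> io_cost ops = k" using assms(2) by blast
  then have "\<exists>ops. valid_evaluation V E M ops \<and> io_cost ops = J_opt V E M"
    unfolding J_opt_def by (rule LeastI_ex)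
  then obtain ops where v: "valid_evaluation V E M ops" and c: "io_cost ops = J_opt V E M" by blast
  then obtain Ff Sf where r: "run V E M ({}, {}, {}) ops = Some (Ff, Sf, V)"
    by (auto simp: valid_evaluation_def)
  interpret evl V E M ops Ff Sf using finV EV r by unfold_locales
  have finT: "finite (topo_orders V E)"
  proof (rule finite_subset[OF _ finite_lists_length_le[OF finV, of "card V"]])
    show "topo_orders V E \<subseteq> {xs. set xs \<subseteq> V \<and> length xs \<le> card V}"
      by (auto simp: topo_orders_def distinct_card[symmetric])
  qed
  have finC: "finite (contig_partitions V X)"
  proof (rule finite_subset[of _ "Pow (Pow V)"])
    show "contig_partitions V X \<subseteq> Pow (Pow V)"
      by (auto simp: contig_partitions_def is_partition_def)
  qed (simp add: finV)
  have neC: "contig_partitions V X \<noteq> {}"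
  proof (cases "V = {}")
    case True
    then have "{} \<in> contig_partitions V X"
      by (simp add: contig_partitions_def is_partition_def)
    then show ?thesis by blast
  next
    case False
    have "contiguous X V" unfolding contiguous_def
      by (rule exI[of _ 0], rule exI[of _ "length X"]) (auto simp: X_props(2)[symmetric] in_set_conv_nth)
    then have "{V} \<in> contig_partitions V X" using False
      by (simp add: contig_partitions_def is_partition_def)
    then show ?thesis by blast
  qed
  have "Min ((\<lambda>X. Max (cut_value E M ` contig_partitions V X)) ` topo_orders V E)
      \<le> Max (cut_value E M ` contig_partitions V X)"
    using finT X_topo by (intro Min_le) auto
  also have "\<dots> \<le> real (io_cost ops)"
    using finC neC cut_le by (subst Max_le_iff) auto
  finally show ?thesis using c by simp
qed

end
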